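(* Let $\mu>2$, let $\Omega_j$, $j\in\mathbf N$, be disjoint open subsets of $\mathbb R^d\setminus B_\mu(0)$ (where $B_\mu(0)$ is the open ball of radius $\mu$ centred at the origin), let $\chi_j$ be the characteristic function of $\Omega_j$, and let $b_j\in L^1_{loc}(\mathbb R^d)$, $j\in\mathbf N$, satisfy $\sup_{j\in\mathbf N}\|b_j\|_{L^\infty(\Omega_j)}<\infty$. (i) Assume $p\in(1,\infty)$ and $\rho>1$, and let $g$ be given by $$\widehat g(\xi)=|\xi|^{-d}(\log|\xi|)^{-\rho/p}\sum_{j=1}^\infty \chi_j(\xi)b_j(\xi).$$ Then $g\in\mathscr F L^p_s(\mathbb R^d)$ with $s=d(p-1)/p$. (ii) Assume $p=1$ and $\rho\ge 0$, and let $g$ be given by $\widehat g(\xi)=|\xi|^{-d}(\log|\xi|)^{-\rho}\sum_{j=1}^\infty \chi_j(\xi)b_j(\xi)$. Then $g\in\mathscr F L^1_s(\mathbb R^d)$ for every $s<0$. (iii) Assume $p=\infty$ and $\rho\ge 0$, and let $g$ be given by $\widehat g(\xi)=|\xi|^{-d}(\log|\xi|)^{-\rho}\sum_{j=1}^\infty \chi_j(\xi)b_j(\xi)$ (i.e. the exponent $\rho/p$ replaced by $\rho$). Then $g\in\mathscr F L^\infty_s(\mathbb R^d)$ with $s=d$.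
   Context: Here $\widehat f(\xi)=\int_{\mathbb R^d} e^{-ix\cdot\xi}f(x)\,dx$ denotes the Fourier transform, $\langle\xi\rangle=(1+|\xi|^2)^{1/2}$, and for $p\in[1,\infty]$, $s\in\mathbb R$, the weighted Fourier Lebesgue space $\mathscr F L^p_s(\mathbb R^d)$ consists of all tempered distributions $f$ such that $\|f\|_{\mathscr F L^p_s}=\|\widehat f\,\langle\cdot\rangle^s\|_{L^p(\mathbb R^d)}$ is finite. *)

theory Defs
  imports "HOL-Analysis.Analysis"
begin

definition japanese :: "'a::euclidean_space \<Rightarrow> real" where
  "japanese \<xi> = sqrt (1 + (norm \<xi>)\<^sup>2)"

text \<open>Membership in the weighted Fourier Lebesgue space FL^p_s of the (tempered)
  distribution whose Fourier transform is the function F, i.e.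
  the L^p norm of F times <xi>^s is finite (p in [1,infinity]).\<close>
definition fourier_lebesgue_hat :: "ennreal \<Rightarrow> real \<Rightarrow> ('a::euclidean_space \<Rightarrow> complex) \<Rightarrow> bool" where
  "fourier_lebesgue_hat p s F \<longleftrightarrow>
     F \<in> borel_measurable lebesgue \<and>
     (if p = \<infinity> then (\<exists>C. AE \<xi> in lebesgue. cmod (F \<xi>) * japanese \<xi> powr s \<le> C)
      else (\<integral>\<^sup>+ \<xi>. ennreal ((cmod (F \<xi>) * japanese \<xi> powr s) powr (enn2real p)) \<partial>lebesgue) < \<infinity>)"

definition ghat :: "(nat \<Rightarrow> 'a::euclidean_space set) \<Rightarrow> (nat \<Rightarrow> 'a \<Rightarrow> complex) \<Rightarrow> real \<Rightarrow> 'a \<Rightarrow> complex" where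
  "ghat \<Omega> b e \<xi> =
     complex_of_real (norm \<xi> powr (- real DIM('a)) * ln (norm \<xi>) powr (- e)) *
     (\<Sum>j. indicator (\<Omega> j) \<xi> * b j \<xi>)"

end

theory Submission
  imports Defs
begin

lemma b_meas:
  fixes f :: "'a::euclidean_space \<Rightarrow> complex"
  assumes "\<And>K. compact K \<Longrightarrow> set_integrable lebesgue K f"
  shows "f \<in> borel_measurable lebesgue"
proof (rule borel_measurable_LIMSEQ_metric)
  fix n :: nat
  have "set_integrable lebesgue (cball 0 (real n)) f" using assms by auto
  then show "(\<lambda>x. indicator (cball 0 (real n)) x *\<^sub>R f x) \<in> borel_measurable lebesgue"
    unfolding set_integrable_def by (rule borel_measurable_integrable)
next
  fix x :: 'a
  obtain N :: nat where "norm x \<le> real N" using real_arch_simple by blast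
  then have "\<forall>n\<ge>N. indicator (cball 0 (real n)) x *\<^sub>R f x = f x" by auto
  then show "(\<lambda>n. indicator (cball 0 (real n)) x *\<^sub>R f x) \<longlonglongrightarrow> f x"
    by (intro tendsto_eventually) (auto simp: eventually_sequentially)
qed

lemma emeas_lebesgue_ball: "r \<ge> 0 \<Longrightarrow> emeasure lebesgue (ball (c::'a::euclidean_space) r) = ennreal (unit_ball_vol (DIM('a)) * r ^ DIM('a))"
  by (simp add: emeasure_ball)

lemma sum_single:
  assumes "disjoint_family \<Omega>"
  shows "(\<Sum>j. indicator (\<Omega> j) x * (b j x :: complex)) = (if \<exists>j. x \<in> \<Omega> j then b (SOME j. x \<in> \<Omega> j) x else 0)"
proof (cases "\<exists>j. x \<in> \<Omega> j")
  case True
  define j0 where "j0 = (SOME j. x \<in> \<Omega> j)"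
  have j0: "x \<in> \<Omega> j0" using True unfolding j0_def by (rule someI_ex)
  have "(\<lambda>j. indicator (\<Omega> j) x * b j x) = (\<lambda>j. if j = j0 then b j0 x else 0)"
    using assms j0 by (auto simp: disjoint_family_on_def indicator_def fun_eq_iff)
  then show ?thesis using True j0_def using sums_unique[OF sums_single[of j0 "\<lambda>_. b j0 x"]] by simp
next
  case False then show ?thesis by (simp add: indicator_def)
qed

lemma ennreal_le_suminf: "(f k :: ennreal) \<le> (\<Sum>n. f n)"
  using ennreal_suminf_lessD leI by blast

lemma log_shell: "2 \<le> (x::real) \<Longrightarrow> 2 ^ nat \<lfloor>log 2 x\<rfloor> \<le> x \<and> x < 2 ^ Suc (nat \<lfloor>log 2 x\<rfloor>)"
  by (smt (verit, del_insts) Suc_n_not_le_n le_log_of_power le_nat_floor power_of_nat_log_le)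

lemma shell:
  fixes f :: "'a::euclidean_space \<Rightarrow> real" and a :: "nat \<Rightarrow> real"
  assumes a0: "\<And>k. 0 \<le> a k" and sa: "summable a"
  and bnd: "AE \<xi> in lebesgue. (norm \<xi> < 2 \<longrightarrow> f \<xi> \<le> 0) \<and>
     (\<forall>k. 2^k \<le> norm \<xi> \<and> norm \<xi> < 2^(Suc k) \<longrightarrow> f \<xi> \<le> a k / 2^(k*DIM('a)))"
  shows "(\<integral>\<^sup>+\<xi>. ennreal (f \<xi>) \<partial>lebesgue) < \<infinity>"
proof -
  define d where "d = DIM('a)"
  define S where "S k = ball (0::'a) (2^Suc k) - ball 0 (2^k)" for k
  define c where "c k = a k / 2^(k*d)" for k
  define V where "V = unit_ball_vol (real d)"
  have V0: "V \<ge> 0" unfolding V_def by simp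
  have Ssets[measurable]: "S k \<in> sets lebesgue" for k unfolding S_def by auto
  have pw: "ennreal (f \<xi>) \<le> (\<Sum>k. ennreal (c k) * indicator (S k) \<xi>)"
    if h: "(norm \<xi> < 2 \<longrightarrow> f \<xi> \<le> 0) \<and>
     (\<forall>k. 2^k \<le> norm \<xi> \<and> norm \<xi> < 2^(Suc k) \<longrightarrow> f \<xi> \<le> a k / 2^(k*DIM('a)))" for \<xi>
  proof (cases "norm \<xi> < 2")
    case True then have "ennreal (f \<xi>) = 0" using h by (simp add: ennreal_neg)
    then show ?thesis by simp
  next
    case False
    define k where "k = nat \<lfloor>log 2 (norm \<xi>)\<rfloor>"
    have k: "2^k \<le> norm \<xi> \<and> norm \<xi> < 2^(Suc k)" using log_shell[of "norm \<xi>"] False k_def by auto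
    then have "\<xi> \<in> S k" by (auto simp: S_def)
    have "ennreal (f \<xi>) \<le> ennreal (c k) * indicator (S k) \<xi>"
      using h k \<open>\<xi> \<in> S k\<close> by (auto simp: c_def d_def intro!: ennreal_leI)
    also have "\<dots> \<le> (\<Sum>k. ennreal (c k) * indicator (S k) \<xi>)" by (rule ennreal_le_suminf)
    finally show ?thesis .
  qed
  have "(\<integral>\<^sup>+\<xi>. ennreal (f \<xi>) \<partial>lebesgue) \<le> (\<integral>\<^sup>+\<xi>. (\<Sum>k. ennreal (c k) * indicator (S k) \<xi>) \<partial>lebesgue)"
    by (rule nn_integral_mono_AE, rule eventually_mono[OF bnd], rule pw)
  also have "\<dots> = (\<Sum>k. \<integral>\<^sup>+\<xi>. ennreal (c k) * indicator (S k) \<xi> \<partial>lebesgue)"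
    by (rule nn_integral_suminf[of "\<lambda>k \<xi>. ennreal (c k) * indicator (S k) \<xi>"]) measurable
  also have "\<dots> = (\<Sum>k. ennreal (c k) * emeasure lebesgue (S k))"
    by (simp add: nn_integral_cmult_indicator)
  also have "\<dots> \<le> (\<Sum>k. ennreal (a k * V * 2^d))"
  proof (rule suminf_le)
    fix k
    have "emeasure lebesgue (S k) \<le> emeasure lebesgue (ball (0::'a) (2^Suc k))"
      by (rule emeasure_mono) (auto simp: S_def)
    also have "\<dots> = ennreal (V * (2^Suc k)^d)"
      by (subst emeas_lebesgue_ball) (auto simp: V_def d_def)
    finally have "ennreal (c k) * emeasure lebesgue (S k) \<le> ennreal (c k) * ennreal (V * (2^Suc k)^d)"
      by (rule mult_left_mono) simp
    also have "\<dots> = ennreal (c k * (V * (2^Suc k)^d))"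
      using a0[of k] V0 by (intro ennreal_mult[symmetric]) (auto simp: c_def)
    also have "c k * (V * (2^Suc k)^d) = a k * V * 2^d"
      by (simp add: c_def power_mult_distrib power_mult[symmetric] mult.commute power_add)
    finally show "ennreal (c k) * emeasure lebesgue (S k) \<le> ennreal (a k * V * 2^d)" .
  qed auto
  also have "\<dots> = ennreal (\<Sum>k. a k * V * 2^d)"
    by (rule suminf_ennreal2) (use a0 V0 sa in \<open>auto intro: summable_mult2\<close>)
  also have "\<dots> < \<infinity>" by simp
  finally show ?thesis .
qed

lemma jap_pos: "japanese (\<xi>::'a::euclidean_space) > 0"
  unfolding japanese_def by (simp add: add_pos_nonneg)

lemma jap_ge: "norm (\<xi>::'a::euclidean_space) \<le> japanese \<xi>"
  unfolding japanese_def by (simp add: real_le_rsqrt)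

lemma jap_le: "1 \<le> norm (\<xi>::'a::euclidean_space) \<Longrightarrow> japanese \<xi> \<le> sqrt 2 * norm \<xi>"
proof -
  assume h: "1 \<le> norm \<xi>"
  have "1 + (norm \<xi>)\<^sup>2 \<le> 2 * (norm \<xi>)\<^sup>2" 
  proof -
    have "1 \<le> (norm \<xi>)\<^sup>2" using h by (simp add: one_le_power)
    then show ?thesis by simp
  qed
  then have "sqrt (1 + (norm \<xi>)\<^sup>2) \<le> sqrt (2 * (norm \<xi>)\<^sup>2)" by (rule real_sqrt_le_mono)
  then show ?thesis unfolding japanese_def by (simp add: real_sqrt_mult)
qed

lemma pow2_powr: "((2::real)^k) powr s = (2 powr s)^k"
  by (simp add: powr_realpow[symmetric] powr_powr mult.commute)
lemma pow2_powr_neg: "((2::real)^k) powr (- real d) = 1 / 2^(k*d)"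
  by (simp add: pow2_powr powr_minus powr_realpow power_mult divide_inverse power_inverse) (metis power_mult mult.commute)

lemma powr_anti: "x \<le> 0 \<Longrightarrow> 0 < a \<Longrightarrow> a \<le> y \<Longrightarrow> y powr x \<le> a powr (x::real)"
  by (rule powr_mono2')

lemma ghat_meas:
  fixes \<Omega> :: "nat \<Rightarrow> 'a::euclidean_space set" and b :: "nat \<Rightarrow> 'a \<Rightarrow> complex"
  assumes "\<And>j. open (\<Omega> j)" and "\<And>j K. compact K \<Longrightarrow> set_integrable lebesgue K (b j)"
  shows "ghat \<Omega> b e \<in> borel_measurable lebesgue"
proof -
  have [measurable]: "b j \<in> borel_measurable lebesgue" for j using assms(2) by (rule b_meas)
  have [measurable]: "\<Omega> j \<in> sets lebesgue" for j using assms(1) by auto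
  have mn: "(norm::'a\<Rightarrow>real) \<in> borel_measurable lebesgue" by (rule measurable_completion) simp
  have m1: "(\<lambda>x::'a. norm x powr (- real DIM('a)) * ln (norm x) powr (-e)) \<in> borel_measurable lebesgue"
    by (intro borel_measurable_times powr_real_measurable borel_measurable_ln mn) auto
  have m2: "(\<lambda>x. indicator (\<Omega> j) x * b j x) \<in> borel_measurable lebesgue" for j
    by (intro borel_measurable_times) auto
  have m3: "(\<lambda>x. \<Sum>j. indicator (\<Omega> j) x * b j x) \<in> borel_measurable lebesgue"
    by (rule borel_measurable_suminf[OF m2])
  show ?thesis unfolding ghat_def[abs_def]
    by (intro borel_measurable_times m3 measurable_compose[OF m1]) simp
qed

lemma ghat_bound:
  fixes \<Omega> :: "nat \<Rightarrow> 'a::euclidean_space set" and b :: "nat \<Rightarrow> 'a \<Rightarrow> complex"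
  assumes disj: "disjoint_family \<Omega>" and outside: "\<And>j. \<Omega> j \<subseteq> - ball 0 \<mu>" and mu: "\<mu> > 2"
    and h: "\<forall>j. \<xi> \<in> \<Omega> j \<longrightarrow> cmod (b j \<xi>) \<le> C" and C: "C \<ge> 0"
  shows "cmod (ghat \<Omega> b e \<xi>) \<le> (if \<mu> \<le> norm \<xi> then norm \<xi> powr (- real DIM('a)) * ln (norm \<xi>) powr (- e) * C else 0)"
proof (cases "\<exists>j. \<xi> \<in> \<Omega> j")
  case True
  define j0 where "j0 = (SOME j. \<xi> \<in> \<Omega> j)"
  have j0: "\<xi> \<in> \<Omega> j0" using True unfolding j0_def by (rule someI_ex)
  have N: "\<mu> \<le> norm \<xi>" using outside[of j0] j0 by auto
  have "cmod (ghat \<Omega> b e \<xi>) = norm \<xi> powr (- real DIM('a)) * ln (norm \<xi>) powr (- e) * cmod (b j0 \<xi>)"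
    unfolding ghat_def sum_single[OF disj] using True j0_def by (simp add: norm_mult)
  also have "\<dots> \<le> norm \<xi> powr (- real DIM('a)) * ln (norm \<xi>) powr (- e) * C"
    using h j0 by (intro mult_left_mono) auto
  finally show ?thesis using N by simp
next
  case False
  then show ?thesis unfolding ghat_def sum_single[OF disj] by (simp add: C)
qed

lemma pt3:
  fixes \<xi> :: "'a::euclidean_space"
  assumes mu: "\<mu> > 2" and C: "C \<ge> 0" and rho: "\<rho> \<ge> 0" and x0: "0 \<le> x"
    and h: "x \<le> (if \<mu> \<le> norm \<xi> then norm \<xi> powr (- real DIM('a)) * ln (norm \<xi>) powr (- \<rho>) * C else 0)"
  shows "x * japanese \<xi> powr real DIM('a) \<le> C * ln 2 powr (- \<rho>) * sqrt 2 powr real DIM('a)"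
proof (cases "\<mu> \<le> norm \<xi>")
  case True
  define N where "N = norm \<xi>"
  define d where "d = real DIM('a)"
  have N2: "N \<ge> 2" using True mu N_def by simp
  have L: "ln N \<ge> ln 2" using N2 by simp
  have L0: "ln 2 > (0::real)" by simp
  have xb: "x \<le> N powr (- d) * ln N powr (- \<rho>) * C" using h True by (simp add: N_def d_def)
  have jb: "japanese \<xi> powr d \<le> (sqrt 2 * N) powr d"
    using jap_le[of \<xi>] N2 jap_pos[of \<xi>] by (intro powr_mono2) (auto simp: N_def d_def)
  have "x * japanese \<xi> powr d \<le> (N powr (- d) * ln N powr (- \<rho>) * C) * ((sqrt 2 * N) powr d)"
    using xb jb x0 by (intro mult_mono) auto
  also have "\<dots> = ln N powr (- \<rho>) * C * sqrt 2 powr d * (N powr (-d) * N powr d)"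
    using N2 by (simp add: powr_mult)
  also have "N powr (-d) * N powr d = 1" using N2 by (simp add: powr_add[symmetric])
  also have "ln N powr (- \<rho>) * C * sqrt 2 powr d * 1 \<le> ln 2 powr (- \<rho>) * C * sqrt 2 powr d"
  proof -
    have "ln N powr (- \<rho>) \<le> ln 2 powr (- \<rho>)" using powr_mono2'[of "-\<rho>" "ln 2" "ln N"] L L0 rho by auto
    then show ?thesis using C by (simp add: mult_right_mono)
  qed
  finally show ?thesis by (simp add: d_def mult_ac)
next
  case False
  then have "x = 0" using h x0 by simp
  then show ?thesis using C by simp
qed

lemma pt2:
  fixes \<xi> :: "'a::euclidean_space"
  assumes mu: "\<mu> > 2" and C: "C \<ge> 0" and rho: "\<rho> \<ge> 0" and s: "s < 0" and x0: "0 \<le> x"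
    and h: "x \<le> (if \<mu> \<le> norm \<xi> then norm \<xi> powr (- real DIM('a)) * ln (norm \<xi>) powr (- \<rho>) * C else 0)"
  shows "(norm \<xi> < 2 \<longrightarrow> (x * japanese \<xi> powr s) powr 1 \<le> 0) \<and>
     (\<forall>k. 2^k \<le> norm \<xi> \<and> norm \<xi> < 2^(Suc k) \<longrightarrow>
        (x * japanese \<xi> powr s) powr 1 \<le> (C * ln 2 powr (- \<rho>) * (2 powr s)^k) / 2^(k*DIM('a)))"
proof (cases "\<mu> \<le> norm \<xi>")
  case True
  define N where "N = norm \<xi>"
  define d where "d = real DIM('a)"
  have N2: "N \<ge> 2" using True mu N_def by simp
  have L: "ln N \<ge> ln 2" using N2 by simp
  have L0: "ln 2 > (0::real)" by simp
  have xb: "x \<le> N powr (- d) * ln N powr (- \<rho>) * C" using h True by (simp add: N_def d_def)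
  have jb: "japanese \<xi> powr s \<le> N powr s"
    using jap_ge[of \<xi>] N2 s by (intro powr_mono2') (auto simp: N_def)
  have Lb: "ln N powr (- \<rho>) \<le> ln 2 powr (- \<rho>)" using powr_mono2'[of "-\<rho>" "ln 2" "ln N"] L L0 rho by auto
  have e1: "(x * japanese \<xi> powr s) powr 1 = x * japanese \<xi> powr s" using x0 by (simp add: powr_one)
  show ?thesis
  proof (intro conjI allI impI)
    show "norm \<xi> < 2 \<Longrightarrow> (x * japanese \<xi> powr s) powr 1 \<le> 0" using N2 N_def by simp
    fix k :: nat assume k: "2^k \<le> norm \<xi> \<and> norm \<xi> < 2^(Suc k)"
    have k1: "N powr (-d) \<le> (2^k) powr (-d)" using k by (intro powr_mono2') (auto simp: N_def d_def)
    have k2: "N powr s \<le> (2^k) powr s" using k s by (intro powr_mono2') (auto simp: N_def)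
    have "(x * japanese \<xi> powr s) powr 1 \<le> (N powr (- d) * ln N powr (- \<rho>) * C) * N powr s"
      unfolding e1 using xb jb x0 by (intro mult_mono) auto
    also have "\<dots> \<le> ((2^k) powr (- d) * ln 2 powr (- \<rho>) * C) * (2^k) powr s"
      using k1 k2 Lb C by (intro mult_mono) auto
    also have "\<dots> = (C * ln 2 powr (- \<rho>) * (2 powr s)^k) / 2^(k*DIM('a))"
      by (simp only: d_def pow2_powr_neg) (simp add: pow2_powr)
    finally show "(x * japanese \<xi> powr s) powr 1 \<le> (C * ln 2 powr (- \<rho>) * (2 powr s)^k) / 2^(k*DIM('a))" .
  qed
next
  case False
  then have "x = 0" using h x0 by simp
  then show ?thesis using C by simp
qed

lemma pt1:
  fixes \<xi> :: "'a::euclidean_space"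
  assumes mu: "\<mu> > 2" and C: "C \<ge> 0" and rho: "\<rho> > 1" and p: "p > 1" and x0: "0 \<le> x"
    and h: "x \<le> (if \<mu> \<le> norm \<xi> then norm \<xi> powr (- real DIM('a)) * ln (norm \<xi>) powr (- (\<rho>/p)) * C else 0)"
  shows "(norm \<xi> < 2 \<longrightarrow> (x * japanese \<xi> powr (real DIM('a) * (p - 1) / p)) powr p \<le> 0) \<and>
     (\<forall>k. 2^k \<le> norm \<xi> \<and> norm \<xi> < 2^(Suc k) \<longrightarrow>
        (x * japanese \<xi> powr (real DIM('a) * (p - 1) / p)) powr p \<le>
          ((C * sqrt 2 powr (real DIM('a) * (p - 1) / p)) powr p * ln 2 powr (- \<rho>) * real k powr (- \<rho>)) / 2^(k*DIM('a)))"
proof (cases "\<mu> \<le> norm \<xi>")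
  case True
  define N where "N = norm \<xi>"
  define d where "d = real DIM('a)"
  define t where "t = d * (p - 1) / p"
  define K where "K = C * sqrt 2 powr t"
  define L where "L = ln N"
  have K0: "K \<ge> 0" using C by (simp add: K_def)
  have N2: "N \<ge> 2" using True mu N_def by simp
  have L0: "L > 0" using N2 by (simp add: L_def)
  have t0: "t \<ge> 0" using p by (simp add: t_def d_def)
  have xb: "x \<le> N powr (- d) * L powr (- (\<rho>/p)) * C" using h True by (simp add: N_def d_def L_def)
  have jb: "japanese \<xi> powr t \<le> (sqrt 2 * N) powr t"
    using jap_le[of \<xi>] N2 jap_pos[of \<xi>] t0 by (intro powr_mono2) (auto simp: N_def)
  have "x * japanese \<xi> powr t \<le> (N powr (- d) * L powr (- (\<rho>/p)) * C) * (sqrt 2 * N) powr t"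
    using xb jb x0 by (intro mult_mono) auto
  also have "\<dots> = (N powr (-d) * N powr t) * L powr (- (\<rho>/p)) * K"
    using N2 by (simp add: powr_mult K_def mult_ac)
  also have "N powr (-d) * N powr t = N powr (- d / p)"
    using p N2 by (simp add: powr_add[symmetric] t_def field_simps)
  finally have yb: "x * japanese \<xi> powr t \<le> N powr (- d / p) * L powr (- (\<rho>/p)) * K" .
  have "(x * japanese \<xi> powr t) powr p \<le> (N powr (- d / p) * L powr (- (\<rho>/p)) * K) powr p"
    using yb x0 jap_pos[of \<xi>] p by (intro powr_mono2) auto
  also have "\<dots> = N powr (- d) * L powr (- \<rho>) * K powr p"
    using p N2 L0 K0 by (simp add: powr_mult powr_powr)
  finally have zb: "(x * japanese \<xi> powr t) powr p \<le> N powr (- d) * L powr (- \<rho>) * K powr p" .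
  show ?thesis unfolding t_def[symmetric] d_def[symmetric] K_def[symmetric]
  proof (intro conjI allI impI)
    show "norm \<xi> < 2 \<Longrightarrow> (x * japanese \<xi> powr t) powr p \<le> 0" using N2 N_def by simp
    fix k :: nat assume k: "2^k \<le> norm \<xi> \<and> norm \<xi> < 2^(Suc k)"
    have k0: "k \<ge> 1"
    proof (rule ccontr)
      assume "\<not> k \<ge> 1" then have "k = 0" by simp
      then show False using k N2 N_def by simp
    qed
    have k1: "N powr (-d) \<le> (2^k) powr (-d)" using k by (intro powr_mono2') (auto simp: N_def d_def)
    have kl0: "ln ((2::real)^k) \<le> ln N" using k N2 N_def by (subst ln_le_cancel_iff) auto
    then have kl: "real k * ln 2 \<le> L" unfolding L_def by (simp add: ln_realpow)
    have k2: "L powr (- \<rho>) \<le> (real k * ln 2) powr (- \<rho>)" using kl k0 rho by (intro powr_mono2') auto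
    also have "\<dots> = real k powr (- \<rho>) * ln 2 powr (- \<rho>)" by (simp add: powr_mult)
    finally have k2': "L powr (- \<rho>) \<le> real k powr (- \<rho>) * ln 2 powr (- \<rho>)" .
    have "(x * japanese \<xi> powr t) powr p \<le> (2^k) powr (-d) * (real k powr (- \<rho>) * ln 2 powr (- \<rho>)) * K powr p"
      using zb k1 k2' by (smt (verit) mult_mono mult_right_mono powr_ge_zero)
    also have "\<dots> = (K powr p * ln 2 powr (- \<rho>) * real k powr (- \<rho>)) / 2^(k*DIM('a))"
      by (simp only: d_def pow2_powr_neg) simp
    finally show "(x * japanese \<xi> powr t) powr p \<le> (K powr p * ln 2 powr (- \<rho>) * real k powr (- \<rho>)) / 2^(k*DIM('a))" .
  qed
next
  case False
  then have "x = 0" using h x0 by simp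
  then show ?thesis using C p by (simp add: mult_nonneg_nonneg)
qed

theorem lemma3p2:
  fixes \<mu> :: real
    and \<Omega> :: "nat \<Rightarrow> 'a::euclidean_space set"
    and b :: "nat \<Rightarrow> 'a \<Rightarrow> complex"
  assumes mu: "\<mu> > 2"
    and open_\<Omega>: "\<And>j. open (\<Omega> j)"
    and disj: "disjoint_family \<Omega>"
    and outside: "\<And>j. \<Omega> j \<subseteq> - ball 0 \<mu>"
    and loc_int: "\<And>j K. compact K \<Longrightarrow> set_integrable lebesgue K (b j)"
    and sup_bound: "\<exists>C. \<forall>j. AE \<xi> in lebesgue. \<xi> \<in> \<Omega> j \<longrightarrow> cmod (b j \<xi>) \<le> C"
  shows "(\<forall>p \<rho>. 1 < p \<and> \<rho> > 1 \<longrightarrow>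
            fourier_lebesgue_hat (ennreal p) (real DIM('a) * (p - 1) / p) (ghat \<Omega> b (\<rho> / p)))
       \<and> (\<forall>\<rho> s. \<rho> \<ge> 0 \<and> s < 0 \<longrightarrow> fourier_lebesgue_hat 1 s (ghat \<Omega> b \<rho>))
       \<and> (\<forall>\<rho>. \<rho> \<ge> 0 \<longrightarrow> fourier_lebesgue_hat \<infinity> (real DIM('a)) (ghat \<Omega> b \<rho>))"
proof -
  obtain C0 where C0: "\<forall>j. AE \<xi> in lebesgue. \<xi> \<in> \<Omega> j \<longrightarrow> cmod (b j \<xi>) \<le> C0"
    using sup_bound by blast
  define C where "C = max C0 0"
  have C: "C \<ge> 0" by (simp add: C_def)
  have "\<forall>j. AE \<xi> in lebesgue. \<xi> \<in> \<Omega> j \<longrightarrow> cmod (b j \<xi>) \<le> C"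
    using C0 by (auto simp: C_def elim!: eventually_mono)
  then have AEb: "AE \<xi> in lebesgue. \<forall>j. \<xi> \<in> \<Omega> j \<longrightarrow> cmod (b j \<xi>) \<le> C"
    by (simp add: AE_all_countable)
  have gb: "AE \<xi> in lebesgue. cmod (ghat \<Omega> b e \<xi>) \<le> (if \<mu> \<le> norm \<xi> then norm \<xi> powr (- real DIM('a)) * ln (norm \<xi>) powr (- e) * C else 0)" for e
    using AEb by (rule eventually_mono) (rule ghat_bound[OF disj outside mu _ C])
  have meas: "ghat \<Omega> b e \<in> borel_measurable lebesgue" for e
    by (rule ghat_meas[OF open_\<Omega> loc_int])
  have P1: "fourier_lebesgue_hat (ennreal p) (real DIM('a) * (p - 1) / p) (ghat \<Omega> b (\<rho> / p))"
    if p: "1 < p" and rho: "\<rho> > 1" for p \<rho>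
  proof -
    have "(\<integral>\<^sup>+ \<xi>. ennreal ((cmod (ghat \<Omega> b (\<rho> / p) \<xi>) * japanese \<xi> powr (real DIM('a) * (p - 1) / p)) powr p) \<partial>lebesgue) < \<infinity>"
      apply (rule shell[where a="\<lambda>k. (C * sqrt 2 powr (real DIM('a) * (p - 1) / p)) powr p * ln 2 powr (- \<rho>) * real k powr (- \<rho>)"])
        apply simp
       apply (use rho in \<open>intro summable_mult, simp add: summable_real_powr_iff\<close>)
      apply (rule eventually_mono[OF gb[of "\<rho> / p"]])
      apply (rule pt1[OF mu C rho p norm_ge_zero])
      apply assumption
      done
    then show ?thesis using p meas unfolding fourier_lebesgue_hat_def by simp
  qed
  have P2: "fourier_lebesgue_hat 1 s (ghat \<Omega> b \<rho>)" if rho: "\<rho> \<ge> 0" and s: "s < 0" for \<rho> s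
  proof -
    have q: "2 powr s < (1::real)" using s by (simp add: powr_less_one)
    have "(\<integral>\<^sup>+ \<xi>. ennreal ((cmod (ghat \<Omega> b \<rho> \<xi>) * japanese \<xi> powr s) powr 1) \<partial>lebesgue) < \<infinity>"
      apply (rule shell[where a="\<lambda>k. C * ln 2 powr (- \<rho>) * (2 powr s)^k"])
        apply (simp add: C)
       apply (use q in \<open>intro summable_mult summable_geometric, simp\<close>)
      apply (rule eventually_mono[OF gb[of "\<rho>"]])
      apply (rule pt2[OF mu C rho s norm_ge_zero])
      apply assumption
      done
    then show ?thesis using meas unfolding fourier_lebesgue_hat_def by simp
  qed
  have P3: "fourier_lebesgue_hat \<infinity> (real DIM('a)) (ghat \<Omega> b \<rho>)" if rho: "\<rho> \<ge> 0" for \<rho>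
  proof -
    have "AE \<xi> in lebesgue. cmod (ghat \<Omega> b \<rho> \<xi>) * japanese \<xi> powr real DIM('a) \<le> C * ln 2 powr (- \<rho>) * sqrt 2 powr real DIM('a)"
      using gb[of \<rho>] by (rule eventually_mono) (rule pt3[OF mu C rho norm_ge_zero])
    then show ?thesis using meas unfolding fourier_lebesgue_hat_def by auto
  qed
  show ?thesis using P1 P2 P3 by blast
qed

end
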